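(* Let $a,d,k,c$ be positive integers such that $\gcd(a,a+d,\ldots,a+kd,c)=1$, and let $\mathcal{S}=\langle a,a+d,a+2d,\ldots,a+kd,c\rangle$. Then $\mathrm{type}(\mathcal{S})\le 2k$.
   Context: $\langle b_1,\ldots,b_t\rangle$ denotes the numerical semigroup of all non-negative integer linear combinations of $b_1,\ldots,b_t$ (such semigroups with generators $a,a+d,\ldots,a+kd,c$ are called AA-semigroups). A pseudo-Frobenius number of a numerical semigroup $\mathcal{S}$ is an integer $x\notin\mathcal{S}$ with $x+s\in\mathcal{S}$ for every nonzero $s\in\mathcal{S}$; $\mathrm{type}(\mathcal{S})$ is the number of pseudo-Frobenius numbers. *)

theory Defs
  imports Main
begin

definition gen_semigroup :: "nat set \<Rightarrow> int set" where
  "gen_semigroup G = {int (\<Sum>g\<in>G. f g * g) | f :: nat \<Rightarrow> nat. True}"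

definition pseudo_frobenius :: "int set \<Rightarrow> int set" where
  "pseudo_frobenius S = {x. x \<notin> S \<and> (\<forall>s\<in>S. s \<noteq> 0 \<longrightarrow> x + s \<in> S)}"

definition semigroup_type :: "int set \<Rightarrow> nat" where
  "semigroup_type S = card (pseudo_frobenius S)"

end

theory Submission
  imports Defs
begin


lemma gs_0: "0 \<in> gen_semigroup G"
  unfolding gen_semigroup_def by (rule CollectI, rule exI[of _ "\<lambda>_. 0"]) simp

lemma gs_gen: assumes "finite G" "g \<in> G" shows "int g \<in> gen_semigroup G"
proof -
  have "(\<Sum>h\<in>G. (if h = g then 1 else 0) * h) = (\<Sum>h\<in>G. if h = g then h else 0)"
    by (rule sum.cong) auto
  also have "\<dots> = g" using assms by (simp add: sum.delta)
  finally have "(\<Sum>h\<in>G. (if h = g then 1 else 0) * h) = g" .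
  then show ?thesis unfolding gen_semigroup_def
    by (intro CollectI exI[of _ "\<lambda>h. if h = g then 1 else 0"]) simp
qed

lemma gs_add: assumes "finite G" "v \<in> gen_semigroup G" "w \<in> gen_semigroup G"
  shows "v + w \<in> gen_semigroup G"
proof -
  obtain f where f: "v = int (\<Sum>g\<in>G. f g * g)" using assms(2) unfolding gen_semigroup_def by auto
  obtain f' where f': "w = int (\<Sum>g\<in>G. f' g * g)" using assms(3) unfolding gen_semigroup_def by auto
  have "v + w = int (\<Sum>g\<in>G. (f g + f' g) * g)"
    by (simp add: f f' distrib_right sum.distrib)
  then show ?thesis unfolding gen_semigroup_def by (intro CollectI exI[of _ "\<lambda>g. f g + f' g"]) simp
qed

lemma gs_min:
  assumes "finite G" "0 \<in> X" "\<And>g. g \<in> G \<Longrightarrow> int g \<in> X"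
    "\<And>v w. v \<in> X \<Longrightarrow> w \<in> X \<Longrightarrow> v + w \<in> X"
  shows "gen_semigroup G \<subseteq> X"
proof
  fix v assume "v \<in> gen_semigroup G"
  then obtain f where f: "v = int (\<Sum>g\<in>G. f g * g)" unfolding gen_semigroup_def by auto
  have mult: "int (n * g) \<in> X" if "g \<in> G" for n g
  proof (induction n)
    case 0 then show ?case using assms(2) by simp
  next
    case (Suc n)
    have "int (Suc n * g) = int g + int (n * g)" by simp
    then show ?case using assms(3)[OF that] assms(4) Suc by metis
  qed
  have "H \<subseteq> G \<Longrightarrow> int (\<Sum>g\<in>H. f g * g) \<in> X" for H
    using finite_subset[OF _ assms(1)]
  proof (induction H rule: infinite_finite_induct)
    case (infinite A) then show ?case by auto
  next
    case empty then show ?case using assms(2) by simp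
  next
    case (insert x F)
    then have "int (\<Sum>g\<in>insert x F. f g * g) = int (f x * x) + int (\<Sum>g\<in>F. f g * g)" by simp
    then show ?case using insert mult assms(4) by auto
  qed
  then show "v \<in> X" using f by auto
qed



locale aa =
  fixes a d k c :: int and S :: "int set"
  assumes pos: "a > 0" "d > 0" "k > 0" "c > 0"
  and S_char: "\<And>v. v \<in> S \<longleftrightarrow> (\<exists>j m n. 0 \<le> m \<and> m \<le> j*k \<and> 0 \<le> n \<and> v = j*a + m*d + n*c)"
begin

definition lift :: "int \<Rightarrow> int \<Rightarrow> int \<Rightarrow> bool" where
  "lift v j m \<longleftrightarrow> 0 \<le> m \<and> m \<le> j*k \<and> v = j*a + m*d"

definition minlift :: "int \<Rightarrow> int \<Rightarrow> int \<Rightarrow> bool" where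
  "minlift v j m \<longleftrightarrow> lift v j m \<and> (\<forall>j' m'. lift v j' m' \<longrightarrow> j \<le> j')"

abbreviation "PF \<equiv> pseudo_frobenius S"

lemma lift_j_nonneg: "lift v j m \<Longrightarrow> 0 \<le> j"
proof -
  assume "lift v j m"
  then have "0 \<le> j * k" unfolding lift_def by auto
  then show "0 \<le> j" using pos(3) by (simp add: zero_le_mult_iff)
qed

lemma lift_in_S: "lift v j m \<Longrightarrow> v \<in> S"
  unfolding lift_def S_char by (rule exI[of _ j], rule exI[of _ m], rule exI[of _ 0]) auto

lemma PF_notin: "x \<in> PF \<Longrightarrow> x \<notin> S"
  unfolding pseudo_frobenius_def by auto

lemma PF_add: "x \<in> PF \<Longrightarrow> s \<in> S \<Longrightarrow> s \<noteq> 0 \<Longrightarrow> x + s \<in> S"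
  unfolding pseudo_frobenius_def by auto

lemma c_in_S: "c \<in> S"
  unfolding S_char by (rule exI[of _ 0], rule exI[of _ 0], rule exI[of _ 1]) simp

lemma PF_lift: assumes "x \<in> PF" shows "\<exists>j m. lift (x + c) j m"
proof -
  have "x + c \<in> S" using PF_add[OF assms c_in_S] pos by auto
  then obtain j m n where h: "0 \<le> m" "m \<le> j*k" "0 \<le> n" "x + c = j*a + m*d + n*c"
    unfolding S_char by blast
  show ?thesis
  proof (cases "n = 0")
    case True then show ?thesis using h unfolding lift_def by auto
  next
    case False
    have "x = j*a + m*d + (n-1)*c" using h(4) by (simp add: algebra_simps)
    then have "x \<in> S" unfolding S_char using h False by (intro exI[of _ j] exI[of _ m] exI[of _ "n-1"]) auto
    then show ?thesis using PF_notin[OF assms] by simp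
  qed
qed

lemma minlift_ex: assumes "lift v j m" shows "\<exists>j0 m0. minlift v j0 m0"
proof -
  have ex: "\<exists>n::nat. \<exists>m. lift v (int n) m" using assms lift_j_nonneg
    by (intro exI[of _ "nat j"]) auto
  define n0 where "n0 = (LEAST n::nat. \<exists>m. lift v (int n) m)"
  obtain m0 where m0: "lift v (int n0) m0" using LeastI_ex[OF ex] unfolding n0_def by blast
  have "int n0 \<le> j'" if "lift v j' m'" for j' m'
  proof -
    have "0 \<le> j'" using lift_j_nonneg that .
    then have "\<exists>m. lift v (int (nat j')) m" using that by auto
    then have "n0 \<le> nat j'" unfolding n0_def by (rule Least_le)
    then show ?thesis using \<open>0 \<le> j'\<close> by linarith
  qed
  then show ?thesis using m0 unfolding minlift_def by blast
qed

lemma down: assumes "x \<in> PF" "N \<ge> 1" "lift (x + c - N*c) j m" shows False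
proof -
  have "x = j*a + m*d + (N-1)*c" using assms(3) unfolding lift_def by (simp add: algebra_simps)
  then have "x \<in> S" unfolding S_char using assms(2,3) unfolding lift_def
    by (intro exI[of _ j] exI[of _ m] exI[of _ "N-1"]) auto
  then show False using PF_notin[OF assms(1)] by simp
qed

lemma incomp: assumes "x \<in> PF" "x' \<in> PF" "x \<noteq> x'" "lift (x+c) j m" "lift (x'+c) j' m'"
  "m \<le> m'" "j*k - m \<le> j'*k - m'"
  shows False
proof -
  define t where "t = (j'-j)*a + (m'-m)*d"
  have "lift t (j'-j) (m'-m)" unfolding lift_def t_def using assms(6,7)
    by (simp add: algebra_simps)
  then have tS: "t \<in> S" by (rule lift_in_S)
  have "x' = x + t" using assms(4,5) unfolding lift_def t_def by (simp add: algebra_simps)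
  then have "t \<noteq> 0" using assms(3) by auto
  then have "x' \<in> S" using PF_add[OF assms(1) tS] \<open>x' = x + t\<close> by simp
  then show False using PF_notin[OF assms(2)] by simp
qed


lemma stepB: assumes "x \<in> PF" "x' \<in> PF" "lift (x+c) j m" "lift (x'+c) j' m'"
  "m < m'" "k dvd (m' - m)" "j'*k - m' < j*k - m"
  shows "\<exists>N jg mg. N \<ge> 1 \<and> lift (N*c) jg mg \<and> m < mg \<and> mg \<le> m' \<and>
     j'*k - m' < jg*k - mg \<and> jg*k - mg \<le> j*k - m"
proof -
  obtain s where s: "m' - m = k * s" using assms(6) by (auto elim: dvdE)
  have s1: "s \<ge> 1"
  proof (rule ccontr)
    assume "\<not> s \<ge> 1" then have "s \<le> 0" by simp
    then have "k * s \<le> 0" using pos(3) by (simp add: mult_nonneg_nonpos)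
    then show False using s assms(5) by linarith
  qed
  define u where "u = s*a + (s*k)*d"
  have ul: "lift u s (s*k)" unfolding lift_def u_def using s1 pos by simp
  have "u > 0" unfolding u_def using s1 pos by (simp add: add_pos_pos)
  then have "x + u \<in> S" using PF_add[OF assms(1) lift_in_S[OF ul]] by simp
  then obtain jt mt n where t: "0 \<le> mt" "mt \<le> jt*k" "0 \<le> n" "x + u = jt*a + mt*d + n*c"
    unfolding S_char by blast
  define N where "N = n + 1"
  have N1: "N \<ge> 1" using N_def t(3) by simp
  define jg where "jg = j + s - jt"
  define mg where "mg = m' - mt"
  have xc: "x + c = j*a + m*d" and x'c: "x' + c = j'*a + m'*d"
    using assms(3,4) unfolding lift_def by auto
  have Nc: "N*c = jg*a + mg*d"
  proof -
    have "N*c = x + c + u - (jt*a + mt*d)" using t(4) unfolding N_def by (simp add: algebra_simps)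
    also have "\<dots> = jg*a + mg*d" unfolding jg_def mg_def u_def xc using s
      by (simp add: algebra_simps)
    finally show ?thesis .
  qed
  have beta: "jg*k - mg = (j*k - m) - (jt*k - mt)" unfolding jg_def mg_def using s
    by (simp add: algebra_simps)
  have mg1: "m < mg"
  proof (rule ccontr)
    assume "\<not> m < mg"
    have "lift (x + c - N*c) (j - jg) (m - mg)" unfolding lift_def
    proof (intro conjI)
      show "0 \<le> m - mg" using \<open>\<not> m < mg\<close> by simp
      have "(j - jg)*k - (m - mg) = jt*k - mt" using beta by (simp add: algebra_simps)
      then show "m - mg \<le> (j - jg) * k" using t(2) by linarith
      show "x + c - N * c = (j - jg) * a + (m - mg) * d" using xc Nc by (simp add: algebra_simps)
    qed
    then show False using down[OF assms(1) N1] by blast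
  qed
  have mg2: "j'*k - m' < jg*k - mg"
  proof (rule ccontr)
    assume "\<not> j'*k - m' < jg*k - mg"
    have "lift (x' + c - N*c) (j' - jg) (m' - mg)" unfolding lift_def
    proof (intro conjI)
      show "0 \<le> m' - mg" using t(1) mg_def by simp
      have "(j' - jg)*k - (m' - mg) = (j'*k - m') - (jg*k - mg)" by (simp add: algebra_simps)
      then show "m' - mg \<le> (j' - jg) * k" using \<open>\<not> j'*k - m' < jg*k - mg\<close> by linarith
      show "x' + c - N * c = (j' - jg) * a + (m' - mg) * d" using x'c Nc by (simp add: algebra_simps)
    qed
    then show False using down[OF assms(2) N1] by blast
  qed
  have "0 \<le> j'*k - m'" using assms(4) unfolding lift_def by simp
  then have "lift (N*c) jg mg" unfolding lift_def using Nc mg1 mg2 assms(3) unfolding lift_def by auto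
  moreover have "mg \<le> m'" using t(1) mg_def by simp
  moreover have "jg*k - mg \<le> j*k - m" using beta t(2) by linarith
  ultimately show ?thesis using mg1 mg2 N_def t(3) by (intro exI[of _ N] exI[of _ jg] exI[of _ mg]) auto
qed


lemma star_ex: assumes "N \<ge> 1" "lift (N*c) jg mg"
  shows "\<exists>Ns js ms. Ns \<ge> 1 \<and> minlift (Ns*c) js ms \<and> (\<forall>N jg mg. N \<ge> 1 \<and> lift (N*c) jg mg \<longrightarrow> Ns \<le> N)"
proof -
  have ex: "\<exists>n::nat. \<exists>jg mg. lift ((int n + 1)*c) jg mg" using assms
    by (intro exI[of _ "nat (N - 1)"]) auto
  define n0 where "n0 = (LEAST n::nat. \<exists>jg mg. lift ((int n + 1)*c) jg mg)"
  obtain j0 m0 where l0: "lift ((int n0 + 1)*c) j0 m0" using LeastI_ex[OF ex] unfolding n0_def by blast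
  obtain js ms where ms: "minlift ((int n0 + 1)*c) js ms" using minlift_ex[OF l0] by blast
  have "int n0 + 1 \<le> N'" if "N' \<ge> 1" "lift (N'*c) jg' mg'" for N' jg' mg'
  proof -
    have "\<exists>jg mg. lift ((int (nat (N' - 1)) + 1)*c) jg mg" using that by auto
    then have "n0 \<le> nat (N' - 1)" unfolding n0_def by (rule Least_le)
    then show ?thesis using that by linarith
  qed
  then show ?thesis using ms by (intro exI[of _ "int n0 + 1"] exI[of _ js] exI[of _ ms]) auto
qed

lemma inj_core:
  assumes PF: "x \<in> PF" "x' \<in> PF"
    and ml: "minlift (x+c) j m" "minlift (x'+c) j' m'"
    and mm: "m < m'" "j'*k - m' < j*k - m"
    and g: "N \<ge> 1" "lift (N*c) jg mg" "m < mg" "mg \<le> m'" "j'*k - m' < jg*k - mg" "jg*k - mg \<le> j*k - m"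
    and st: "Ns \<ge> 1" "minlift (Ns*c) js ms" "\<forall>N jg mg. N \<ge> 1 \<and> lift (N*c) jg mg \<longrightarrow> Ns \<le> N"
    and side: "(m < ms) = (m' < ms)"
  shows False
proof -
  have l: "lift (x+c) j m" "lift (x'+c) j' m'" using ml unfolding minlift_def by auto
  have ls: "lift (Ns*c) js ms" using st(2) unfolding minlift_def by auto
  have NN: "Ns \<le> N" using st(3) g(1,2) by blast
  have xc: "x + c = j*a + m*d" "0 \<le> m" "m \<le> j*k" using l(1) unfolding lift_def by auto
  have x'c: "x' + c = j'*a + m'*d" "0 \<le> m'" "m' \<le> j'*k" using l(2) unfolding lift_def by auto
  have Nc: "N*c = jg*a + mg*d" using g(2) unfolding lift_def by auto
  have Nsc: "Ns*c = js*a + ms*d" "0 \<le> ms" "ms \<le> js*k" using ls unfolding lift_def by auto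
  show False
  proof (cases "m' < ms")
    case True
    then have "mg < ms" using g(4) by simp
    show False
    proof (cases "N = Ns")
      case True
      have eq: "(jg - js)*a = (ms - mg)*d" using Nc Nsc(1) True by (simp add: algebra_simps)
      have "(ms - mg)*d > 0" using \<open>mg < ms\<close> pos(2) by simp
      then have "(jg - js)*a > 0" using eq by simp
      then have "jg - js > 0" using pos(1) by (simp add: zero_less_mult_iff)
      have "lift (x+c) (j - (jg - js)) (m + (ms - mg))" unfolding lift_def
      proof (intro conjI)
        show "0 \<le> m + (ms - mg)" using xc(2) \<open>mg < ms\<close> by simp
        have "(j - (jg - js))*k - (m + (ms - mg)) = (j*k - m) - (jg*k - mg) + (js*k - ms)"
          by (simp add: algebra_simps)
        then show "m + (ms - mg) \<le> (j - (jg - js)) * k" using g(6) Nsc(3) by linarith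
        show "x + c = (j - (jg - js)) * a + (m + (ms - mg)) * d" using xc(1) eq
          by (simp add: algebra_simps)
      qed
      then have "j \<le> j - (jg - js)" using ml(1) unfolding minlift_def by blast
      then show False using \<open>jg - js > 0\<close> by simp
    next
      case False
      then have N1: "N - Ns \<ge> 1" using NN by simp
      have "lift (x + c - (N - Ns)*c) (j - jg + js) (m - mg + ms)" unfolding lift_def
      proof (intro conjI)
        show "0 \<le> m - mg + ms" using xc(2) \<open>mg < ms\<close> by simp
        have "(j - jg + js)*k - (m - mg + ms) = (j*k - m) - (jg*k - mg) + (js*k - ms)"
          by (simp add: algebra_simps)
        then show "m - mg + ms \<le> (j - jg + js) * k" using g(6) Nsc(3) by linarith
        show "x + c - (N - Ns)*c = (j - jg + js) * a + (m - mg + ms) * d" using xc(1) Nc Nsc(1)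
          by (simp add: algebra_simps)
      qed
      then show False using down[OF PF(1) N1] by blast
    qed
  next
    case False
    then have "\<not> m < ms" using side by simp
    have bp: "j*k - m < js*k - ms"
    proof (rule ccontr)
      assume nb: "\<not> j*k - m < js*k - ms"
      have "lift (x + c - Ns*c) (j - js) (m - ms)" unfolding lift_def
      proof (intro conjI)
        show "0 \<le> m - ms" using \<open>\<not> m < ms\<close> by simp
        have "(j - js)*k - (m - ms) = (j*k - m) - (js*k - ms)" by (simp add: algebra_simps)
        then show "m - ms \<le> (j - js) * k" using nb by linarith
        show "x + c - Ns*c = (j - js) * a + (m - ms) * d" using xc(1) Nsc(1) by (simp add: algebra_simps)
      qed
      then show False using down[OF PF(1) st(1)] by blast
    qed
    show False
    proof (cases "N = Ns")
      case True
      have "js \<le> jg" using st(2) g(2) True unfolding minlift_def by blast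
      have eq: "mg*d = (js - jg)*a + ms*d" using Nc Nsc(1) True by (simp add: algebra_simps)
      have "(js - jg)*a \<le> 0" using \<open>js \<le> jg\<close> pos(1) by (simp add: mult_nonpos_nonneg)
      then have "mg*d \<le> ms*d" using eq by simp
      then have "mg \<le> ms" using pos(2) by simp
      have "js*k \<le> jg*k" using \<open>js \<le> jg\<close> pos(3) by simp
      then show False using bp g(6) \<open>mg \<le> ms\<close> by linarith
    next
      case False
      then have N1: "N - Ns \<ge> 1" using NN by simp
      have "lift (x' + c - (N - Ns)*c) (j' - jg + js) (m' - mg + ms)" unfolding lift_def
      proof (intro conjI)
        show "0 \<le> m' - mg + ms" using g(4) Nsc(2) by simp
        have "(j' - jg + js)*k - (m' - mg + ms) = (j'*k - m') + ((js*k - ms) - (jg*k - mg))"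
          by (simp add: algebra_simps)
        then show "m' - mg + ms \<le> (j' - jg + js) * k" using g(6) bp x'c(3) by linarith
        show "x' + c - (N - Ns)*c = (j' - jg + js) * a + (m' - mg + ms) * d" using x'c(1) Nc Nsc(1)
          by (simp add: algebra_simps)
      qed
      then show False using down[OF PF(2) N1] by blast
    qed
  qed
qed


lemma card_PF: "card PF \<le> 2 * nat k"
proof -
  define ml where "ml x = (SOME p. minlift (x+c) (fst p) (snd p))" for x
  have mlP: "minlift (x+c) (fst (ml x)) (snd (ml x))" if xin: "x \<in> PF" for x
  proof -
    obtain j m where "lift (x+c) j m" using PF_lift[OF xin] by blast
    then obtain j0 m0 where "minlift (x+c) j0 m0" using minlift_ex by blast
    then have "\<exists>p. minlift (x+c) (fst p) (snd p)" by (intro exI[of _ "(j0,m0)"]) simp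
    then show ?thesis unfolding ml_def by (rule someI_ex)
  qed
  have "\<exists>Ns js ms. (\<exists>N jg mg. N \<ge> 1 \<and> lift (N*c) jg mg) \<longrightarrow>
     (Ns \<ge> 1 \<and> minlift (Ns*c) js ms \<and> (\<forall>N jg mg. N \<ge> 1 \<and> lift (N*c) jg mg \<longrightarrow> Ns \<le> N))"
    using star_ex by blast
  then obtain Ns js ms where st: "(\<exists>N jg mg. N \<ge> 1 \<and> lift (N*c) jg mg) \<Longrightarrow>
     (Ns \<ge> 1 \<and> minlift (Ns*c) js ms \<and> (\<forall>N jg mg. N \<ge> 1 \<and> lift (N*c) jg mg \<longrightarrow> Ns \<le> N))"
    by blast
  have core: False if H: "x \<in> PF" "x' \<in> PF" "x \<noteq> x'" "minlift (x+c) j m" "minlift (x'+c) j' m'"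
    "m mod k = m' mod k" "m \<le> m'" "(m < ms) = (m' < ms)" for x x' j m j' m'
  proof -
    have l: "lift (x+c) j m" "lift (x'+c) j' m'" using H(4,5) unfolding minlift_def by auto
    show False
    proof (cases "j*k - m \<le> j'*k - m'")
      case True
      then show False using incomp[OF H(1,2,3) l H(7)] by blast
    next
      case False
      show False
      proof (cases "m = m'")
        case True
        then show False using incomp[OF H(2,1) _ l(2,1)] H(3) False by auto
      next
        case False
        then have "m < m'" using H(7) by simp
        have "k dvd (m' - m)" using H(6) by (metis mod_eq_dvd_iff)
        then obtain N jg mg where g: "N \<ge> 1" "lift (N*c) jg mg" "m < mg" "mg \<le> m'"
          "j'*k - m' < jg*k - mg" "jg*k - mg \<le> j*k - m"
          using stepB[OF H(1,2) l \<open>m < m'\<close>] \<open>\<not> j*k - m \<le> j'*k - m'\<close> by auto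
        then have "Ns \<ge> 1 \<and> minlift (Ns*c) js ms \<and> (\<forall>N jg mg. N \<ge> 1 \<and> lift (N*c) jg mg \<longrightarrow> Ns \<le> N)"
          using st by blast
        then show False using inj_core[OF H(1,2,4,5) \<open>m < m'\<close> _ g _ _ _ H(8)]
          \<open>\<not> j*k - m \<le> j'*k - m'\<close> by auto
      qed
    qed
  qed
  define lab where "lab x = (snd (ml x) mod k, snd (ml x) < ms)" for x
  have inj: "inj_on lab PF"
  proof (rule inj_onI, rule ccontr)
    fix x x' assume h: "x \<in> PF" "x' \<in> PF" "lab x = lab x'" "x \<noteq> x'"
    have e: "snd (ml x) mod k = snd (ml x') mod k" "(snd (ml x) < ms) = (snd (ml x') < ms)"
      using h(3) unfolding lab_def by auto
    show False
    proof (cases "snd (ml x) \<le> snd (ml x')")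
      case True
      then show False using core[OF h(1,2,4) mlP[OF h(1)] mlP[OF h(2)] e(1) _ e(2)] by blast
    next
      case False
      then show False using core[OF h(2,1) _ mlP[OF h(2)] mlP[OF h(1)]] e h(4) by auto
    qed
  qed
  have sub: "lab ` PF \<subseteq> {0..<k} \<times> (UNIV :: bool set)"
    unfolding lab_def using pos(3) by auto
  have "card PF \<le> card ({0..<k} \<times> (UNIV :: bool set))"
    by (rule card_inj_on_le[OF inj sub]) simp
  also have "\<dots> = 2 * nat k" by (simp add: card_cartesian_product)
  finally show ?thesis .
qed

end


lemma S_char_gen:
  fixes a d k c :: nat
  assumes kpos: "k > 0"
  defines "G \<equiv> {a + i * d | i. i \<le> k} \<union> {c}"
  shows "v \<in> gen_semigroup G \<longleftrightarrow>
    (\<exists>j m n. 0 \<le> m \<and> m \<le> j * int k \<and> 0 \<le> n \<and> v = j * int a + m * int d + n * int c)"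
proof -
  have fin: "finite G" unfolding G_def
  proof -
    have "{a + i * d | i. i \<le> k} = (\<lambda>i. a + i * d) ` {..k}" by auto
    then show "finite ({a + i * d | i. i \<le> k} \<union> {c})" by simp
  qed
  define X where "X = {v. \<exists>j m n. 0 \<le> m \<and> m \<le> j * int k \<and> 0 \<le> n \<and> v = j * int a + m * int d + n * int c}"
  have sub: "gen_semigroup G \<subseteq> X"
  proof (rule gs_min[OF fin])
    show "0 \<in> X" unfolding X_def by (intro CollectI exI[of _ 0]) simp
    show "int g \<in> X" if "g \<in> G" for g
    proof -
      from that consider (gen) i where "i \<le> k" "g = a + i * d" | (c) "g = c" unfolding G_def by blast
      then show ?thesis
      proof cases
        case gen then show ?thesis unfolding X_def
          by (intro CollectI exI[of _ 1] exI[of _ "int i"] exI[of _ 0]) auto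
      next
        case c then show ?thesis unfolding X_def
          by (intro CollectI exI[of _ 0] exI[of _ 0] exI[of _ 1]) auto
      qed
    qed
    show "v + w \<in> X" if vX: "v \<in> X" and wX: "w \<in> X" for v w
    proof -
      obtain j m n where 1: "0 \<le> m" "m \<le> j * int k" "0 \<le> n" "v = j * int a + m * int d + n * int c"
        using vX unfolding X_def by blast
      obtain j' m' n' where 2: "0 \<le> m'" "m' \<le> j' * int k" "0 \<le> n'" "w = j' * int a + m' * int d + n' * int c"
        using wX unfolding X_def by blast
      show ?thesis unfolding X_def using 1 2
        by (intro CollectI exI[of _ "j + j'"] exI[of _ "m + m'"] exI[of _ "n + n'"]) (simp add: algebra_simps)
    qed
  qed
  have Tin: "\<forall>m::nat. m \<le> J * k \<longrightarrow> int (J * a + m * d) \<in> gen_semigroup G" for J :: nat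
  proof (induction J)
    case 0 then show ?case using gs_0 by simp
  next
    case (Suc J)
    show ?case
    proof (intro allI impI)
      fix m :: nat assume m: "m \<le> Suc J * k"
      define i where "i = min m k"
      have "m - i \<le> J * k" using m unfolding i_def by auto
      then have r: "int (J * a + (m - i) * d) \<in> gen_semigroup G" using Suc by blast
      have "a + i * d \<in> G" unfolding G_def i_def by auto
      then have g: "int (a + i * d) \<in> gen_semigroup G" using gs_gen[OF fin] by blast
      have "i \<le> m" unfolding i_def by simp
      then obtain r where "m = i + r" using le_Suc_ex by blast
      then have "Suc J * a + m * d = (a + i * d) + (J * a + (m - i) * d)"
        by (simp add: algebra_simps)
      then have "int (Suc J * a + m * d) = int (a + i * d) + int (J * a + (m - i) * d)"
        by simp
      then show "int (Suc J * a + m * d) \<in> gen_semigroup G" using gs_add[OF fin g r] by metis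
    qed
  qed
  have cin: "int (n * c) \<in> gen_semigroup G" for n :: nat
  proof (induction n)
    case 0 then show ?case using gs_0 by simp
  next
    case (Suc n)
    have "c \<in> G" unfolding G_def by simp
    then have "int c \<in> gen_semigroup G" using gs_gen[OF fin] by blast
    then show ?case using gs_add[OF fin _ Suc] by simp
  qed
  show ?thesis
  proof
    assume "v \<in> gen_semigroup G" then show "\<exists>j m n. 0 \<le> m \<and> m \<le> j * int k \<and> 0 \<le> n \<and> v = j * int a + m * int d + n * int c"
      using sub unfolding X_def by blast
  next
    assume "\<exists>j m n. 0 \<le> m \<and> m \<le> j * int k \<and> 0 \<le> n \<and> v = j * int a + m * int d + n * int c"
    then obtain j m n where h: "0 \<le> m" "m \<le> j * int k" "0 \<le> n" "v = j * int a + m * int d + n * int c" by blast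
    have "0 \<le> j * int k" using h by linarith
    then have j0: "0 \<le> j" if "k > 0" using that by (simp add: zero_le_mult_iff)
    show "v \<in> gen_semigroup G"
    proof -
      have "0 \<le> j" using j0 kpos by simp
      have "nat m \<le> nat j * k" using h(2) \<open>0 \<le> j\<close> h(1)
        by (metis nat_int nat_mono nat_mult_distrib of_nat_0_le_iff)
      then have t: "int (nat j * a + nat m * d) \<in> gen_semigroup G" using Tin by blast
      have "v = int (nat j * a + nat m * d) + int (nat n * c)" using h \<open>0 \<le> j\<close> by simp
      then show ?thesis using gs_add[OF fin t cin] by metis
    qed
  qed
qed

theorem theorem3:
  fixes a d k c :: nat
  assumes "0 < a" and "0 < d" and "0 < k" and "0 < c"
    and "Gcd ({a + i * d | i. i \<le> k} \<union> {c}) = 1"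
  shows "semigroup_type (gen_semigroup ({a + i * d | i. i \<le> k} \<union> {c})) \<le> 2 * k"
proof -
  interpret aa "int a" "int d" "int k" "int c" "gen_semigroup ({a + i * d | i. i \<le> k} \<union> {c})"
    by unfold_locales (use assms S_char_gen[OF assms(3)] in auto)
  show ?thesis unfolding semigroup_type_def using card_PF by simp
qed

end
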